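(* Let $G$ be a non-trivial finite group and let $P$ be a finite $G$-poset. Then $$\chi\left(\widetilde{C}_P\right)\leq \dim(P)+1.$$
   Context: A $G$-poset is a partially ordered set $(P,\preceq)$ together with an action of the group $G$ on $P$ that preserves the order: $x\preceq y \Rightarrow g\cdot x\preceq g\cdot y$. For $x\in P$ let $[x]=\{g\cdot x: g\in G\}$ be its orbit. The strong compatibility graph $\widetilde{C}_P$ is the simple graph with vertex set $P$ in which two elements $x,y\in P$ are adjacent if there is $g\in G\setminus\{e\}$ ($e$ the identity) such that $x$ and $g\cdot y$ are comparable in $P$, and $y\notin[x]$. The dimension $\dim(P)$ is the dimension of the order complex $\Delta(P)$ (the simplicial complex whose simplices are the chains of $P$), i.e. the maximum number of elements in a chain of $P$ minus one. $\chi$ denotes the chromatic number. *)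

theory Defs
  imports "HOL-Algebra.Group_Action"
begin

definition partial_order_on_set :: "'a set \<Rightarrow> ('a \<Rightarrow> 'a \<Rightarrow> bool) \<Rightarrow> bool" where
  "partial_order_on_set P leq \<longleftrightarrow>
     (\<forall>x\<in>P. leq x x) \<and>
     (\<forall>x\<in>P. \<forall>y\<in>P. leq x y \<and> leq y x \<longrightarrow> x = y) \<and>
     (\<forall>x\<in>P. \<forall>y\<in>P. \<forall>z\<in>P. leq x y \<and> leq y z \<longrightarrow> leq x z)"

definition G_poset :: "('g, 'm) monoid_scheme \<Rightarrow> 'a set \<Rightarrow> ('a \<Rightarrow> 'a \<Rightarrow> bool) \<Rightarrow> ('g \<Rightarrow> 'a \<Rightarrow> 'a) \<Rightarrow> bool" where
  "G_poset G P leq phi \<longleftrightarrow>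
     group_action G P phi \<and> partial_order_on_set P leq \<and>
     (\<forall>g\<in>carrier G. \<forall>x\<in>P. \<forall>y\<in>P. leq x y \<longrightarrow> leq (phi g x) (phi g y))"

definition comparable :: "('a \<Rightarrow> 'a \<Rightarrow> bool) \<Rightarrow> 'a \<Rightarrow> 'a \<Rightarrow> bool" where
  "comparable leq x y \<longleftrightarrow> leq x y \<or> leq y x"

definition strong_compat_adj :: "('g, 'm) monoid_scheme \<Rightarrow> 'a set \<Rightarrow> ('a \<Rightarrow> 'a \<Rightarrow> bool) \<Rightarrow> ('g \<Rightarrow> 'a \<Rightarrow> 'a) \<Rightarrow> 'a \<Rightarrow> 'a \<Rightarrow> bool" where
  "strong_compat_adj G P leq phi x y \<longleftrightarrow>
     x \<in> P \<and> y \<in> P \<and> x \<noteq> y \<and>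
     (\<exists>g\<in>carrier G - {\<one>\<^bsub>G\<^esub>}. comparable leq x (phi g y)) \<and>
     y \<notin> orbit G phi x"

definition chromatic_number :: "'a set \<Rightarrow> ('a \<Rightarrow> 'a \<Rightarrow> bool) \<Rightarrow> nat" where
  "chromatic_number V E = (LEAST k. \<exists>c :: 'a \<Rightarrow> nat.
      (\<forall>x\<in>V. c x < k) \<and> (\<forall>x\<in>V. \<forall>y\<in>V. E x y \<longrightarrow> c x \<noteq> c y))"

definition is_chain :: "'a set \<Rightarrow> ('a \<Rightarrow> 'a \<Rightarrow> bool) \<Rightarrow> 'a set \<Rightarrow> bool" where
  "is_chain P leq C \<longleftrightarrow> C \<subseteq> P \<and> (\<forall>x\<in>C. \<forall>y\<in>C. comparable leq x y)"

text \<open>Dimension of the order complex: maximal number of elements of a chain minus one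
  (for finite P; equals -1 for empty P).\<close>
definition poset_dim :: "'a set \<Rightarrow> ('a \<Rightarrow> 'a \<Rightarrow> bool) \<Rightarrow> int" where
  "poset_dim P leq = int (Max {card C | C. is_chain P leq C}) - 1"

end

theory Submission
  imports Defs
begin

lemma po_refl: "partial_order_on_set P leq \<Longrightarrow> x \<in> P \<Longrightarrow> leq x x"
  unfolding partial_order_on_set_def by blast

lemma po_antisym: "partial_order_on_set P leq \<Longrightarrow> x \<in> P \<Longrightarrow> y \<in> P \<Longrightarrow> leq x y \<Longrightarrow> leq y x \<Longrightarrow> x = y"
  unfolding partial_order_on_set_def by blast

lemma po_trans: "partial_order_on_set P leq \<Longrightarrow> x \<in> P \<Longrightarrow> y \<in> P \<Longrightarrow> z \<in> P \<Longrightarrow> leq x y \<Longrightarrow> leq y z \<Longrightarrow> leq x z"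
  unfolding partial_order_on_set_def by blast

lemma chain_single: "partial_order_on_set P leq \<Longrightarrow> x \<in> P \<Longrightarrow> is_chain P leq {x}"
  unfolding is_chain_def comparable_def using po_refl by fastforce

definition hgt :: "'a set \<Rightarrow> ('a \<Rightarrow> 'a \<Rightarrow> bool) \<Rightarrow> 'a \<Rightarrow> nat" where
  "hgt P leq x = Max (card ` {C. is_chain P leq C \<and> (\<forall>z\<in>C. leq z x)})"

lemma hgt_fin:
  assumes "finite P"
  shows "finite (card ` {C. is_chain P leq C \<and> (\<forall>z\<in>C. leq z x)})"
proof -
  have "{C. is_chain P leq C \<and> (\<forall>z\<in>C. leq z x)} \<subseteq> Pow P"
  proof
    fix C assume "C \<in> {C. is_chain P leq C \<and> (\<forall>z\<in>C. leq z x)}"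
    then have "C \<subseteq> P" unfolding is_chain_def by blast
    then show "C \<in> Pow P" by blast
  qed
  then show ?thesis using assms by (meson finite_Pow_iff finite_imageI finite_subset)
qed

lemma hgt_mem:
  assumes "finite P" "x \<in> P" "partial_order_on_set P leq"
  shows "\<exists>C. is_chain P leq C \<and> (\<forall>z\<in>C. leq z x) \<and> card C = hgt P leq x"
proof -
  have "{x} \<in> {C. is_chain P leq C \<and> (\<forall>z\<in>C. leq z x)}"
    using chain_single[OF assms(3,2)] po_refl[OF assms(3,2)] by blast
  then have ne: "card ` {C. is_chain P leq C \<and> (\<forall>z\<in>C. leq z x)} \<noteq> {}" by blast
  have "hgt P leq x \<in> card ` {C. is_chain P leq C \<and> (\<forall>z\<in>C. leq z x)}"
    unfolding hgt_def using Max_in[OF hgt_fin[OF assms(1)] ne] .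
  then show ?thesis by auto
qed

lemma hgt_ge:
  assumes "finite P" "is_chain P leq C" "\<forall>z\<in>C. leq z x"
  shows "card C \<le> hgt P leq x"
proof -
  have "card C \<in> card ` {C. is_chain P leq C \<and> (\<forall>z\<in>C. leq z x)}" using assms(2,3) by blast
  then show ?thesis unfolding hgt_def by (rule Max_ge[OF hgt_fin[OF assms(1)]])
qed

lemma hgt_ge1:
  assumes "finite P" "x \<in> P" "partial_order_on_set P leq"
  shows "1 \<le> hgt P leq x"
proof -
  have "is_chain P leq {x}" using chain_single[OF assms(3,2)] .
  moreover have "\<forall>z\<in>{x}. leq z x" using po_refl[OF assms(3,2)] by blast
  ultimately show ?thesis using hgt_ge[OF assms(1), of leq "{x}" x] by simp
qed

lemma hgt_strict:
  assumes "finite P" "partial_order_on_set P leq" "x \<in> P" "y \<in> P" "leq x y" "x \<noteq> y"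
  shows "hgt P leq x < hgt P leq y"
proof -
  obtain C where C: "is_chain P leq C" "\<forall>z\<in>C. leq z x" "card C = hgt P leq x"
    using hgt_mem[OF assms(1,3,2)] by blast
  have fC: "finite C" using C(1) assms(1) unfolding is_chain_def by (meson finite_subset)
  have yC: "y \<notin> C"
  proof
    assume "y \<in> C"
    then have "leq y x" using C by auto
    moreover have "x = y" using po_antisym[OF assms(2,3,4,5)] calculation by blast
    ultimately show False using assms(6) by blast
  qed
  have below: "\<forall>z\<in>insert y C. leq z y"
  proof
    fix z assume "z \<in> insert y C"
    then show "leq z y"
    proof
      assume "z = y" then show ?thesis using po_refl[OF assms(2,4)] by simp
    next
      assume "z \<in> C"
      then have "leq z x" "z \<in> P" using C unfolding is_chain_def by auto
      then show ?thesis using po_trans[OF assms(2) _ assms(3,4) _ assms(5)] by blast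
    qed
  qed
  have ch: "is_chain P leq (insert y C)"
    unfolding is_chain_def
  proof (intro conjI ballI)
    show "insert y C \<subseteq> P" using C(1) assms(4) unfolding is_chain_def by blast
  next
    fix a b assume a: "a \<in> insert y C" and b: "b \<in> insert y C"
    show "comparable leq a b"
    proof (cases "a = y")
      case True then show ?thesis using below b unfolding comparable_def by blast
    next
      case False
      then have aC: "a \<in> C" using a by blast
      show ?thesis
      proof (cases "b = y")
        case True then show ?thesis using below a unfolding comparable_def by blast
      next
        case False then have "b \<in> C" using b by blast
        then show ?thesis using aC C(1) unfolding is_chain_def by blast
      qed
    qed
  qed
  have "card (insert y C) = Suc (card C)" using fC yC by simp
  then show ?thesis using hgt_ge[OF assms(1) ch below] C(3) by simp
qed

lemma hgt_map_le:
  assumes "finite P" "G_poset G P leq phi" "g \<in> carrier G" "x \<in> P"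
  shows "hgt P leq x \<le> hgt P leq (phi g x)"
proof -
  have ga: "group_action G P phi" and po: "partial_order_on_set P leq"
    and mono: "\<forall>x\<in>P. \<forall>y\<in>P. leq x y \<longrightarrow> leq (phi g x) (phi g y)"
    using assms unfolding G_poset_def by simp_all
  obtain C where C: "is_chain P leq C" "\<forall>z\<in>C. leq z x" "card C = hgt P leq x"
    using hgt_mem[OF assms(1,4) po] by blast
  have CP: "C \<subseteq> P" using C unfolding is_chain_def by auto
  have inj: "inj_on (phi g) C" using group_action.inj_prop[OF ga assms(3)] CP
    by (meson inj_on_subset)
  have img: "phi g ` C \<subseteq> P" using group_action.surj_prop[OF ga assms(3)] CP by blast
  have ch: "is_chain P leq (phi g ` C)"
    unfolding is_chain_def
  proof (intro conjI img ballI)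
    fix a b assume "a \<in> phi g ` C" "b \<in> phi g ` C"
    then obtain a' b' where ab: "a' \<in> C" "b' \<in> C" "a = phi g a'" "b = phi g b'" by blast
    then have "comparable leq a' b'" using C(1) unfolding is_chain_def by blast
    moreover have "a' \<in> P" "b' \<in> P" using ab CP by auto
    ultimately show "comparable leq a b" using mono ab unfolding comparable_def by blast
  qed
  have bl: "\<forall>z\<in>phi g ` C. leq z (phi g x)" using C(2) CP mono assms(4) by auto
  have "card (phi g ` C) = card C" using inj by (simp add: card_image)
  then show ?thesis using hgt_ge[OF assms(1) ch bl] C(3) by simp
qed

lemma hgt_map:
  assumes "finite P" "G_poset G P leq phi" "g \<in> carrier G" "x \<in> P"
  shows "hgt P leq (phi g x) = hgt P leq x"
proof -
  have ga: "group_action G P phi" using assms unfolding G_poset_def by simp_all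
  have grp: "group G" using ga group_action.group_hom group_hom.axioms(1) by blast
  have ig: "inv\<^bsub>G\<^esub> g \<in> carrier G" using grp assms(3) by simp
  have y: "phi g x \<in> P" using group_action.element_image[OF ga assms(3,4)] by simp
  have bk: "phi (inv\<^bsub>G\<^esub> g) (phi g x) = x" using group_action.orbit_sym_aux[OF ga assms(3,4)] by simp
  have "hgt P leq (phi g x) \<le> hgt P leq x"
    using hgt_map_le[OF assms(1,2) ig y] bk by simp
  then show ?thesis using hgt_map_le[OF assms] by simp
qed

theorem lemma7:
  fixes G :: "('g, 'm) monoid_scheme"
    and P :: "'a set" and leq :: "'a \<Rightarrow> 'a \<Rightarrow> bool" and phi :: "'g \<Rightarrow> 'a \<Rightarrow> 'a"
  assumes "group G"
    and "finite (carrier G)"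
    and "carrier G \<noteq> {\<one>\<^bsub>G\<^esub>}"
    and "finite P"
    and "G_poset G P leq phi"
  shows "int (chromatic_number P (strong_compat_adj G P leq phi)) \<le> poset_dim P leq + 1"
proof -
  have ga: "group_action G P phi" and po: "partial_order_on_set P leq"
    using assms(5) unfolding G_poset_def by simp_all
  define K where "K = Max {card C | C. is_chain P leq C}"
  have finK: "finite {card C | C. is_chain P leq C}"
  proof -
    have "{card C | C. is_chain P leq C} \<subseteq> card ` Pow P"
    proof
      fix n assume "n \<in> {card C | C. is_chain P leq C}"
      then obtain C where "n = card C" "is_chain P leq C" by blast
      then show "n \<in> card ` Pow P" unfolding is_chain_def by blast
    qed
    then show ?thesis using assms(4) by (meson finite_Pow_iff finite_imageI finite_subset)
  qed
  have hK: "hgt P leq x \<le> K" if xP: "x \<in> P" for x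
  proof -
    obtain C where C1: "is_chain P leq C" and C2: "card C = hgt P leq x"
      using hgt_mem[OF assms(4) xP po] by blast
    have "hgt P leq x = card C \<and> is_chain P leq C" using C1 C2 by simp
    then have "hgt P leq x \<in> {card C | C. is_chain P leq C}" by (rule_tac CollectI, rule_tac exI)
    then show ?thesis unfolding K_def by (rule Max_ge[OF finK])
  qed
  define c where "c x = hgt P leq x - 1" for x
  have col: "(\<forall>x\<in>P. c x < K) \<and> (\<forall>x\<in>P. \<forall>y\<in>P. strong_compat_adj G P leq phi x y \<longrightarrow> c x \<noteq> c y)"
  proof (intro conjI ballI impI)
    fix x assume xP: "x \<in> P"
    have "1 \<le> hgt P leq x" using hgt_ge1[OF assms(4) xP po] .
    moreover have "hgt P leq x \<le> K" using hK[OF xP] .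
    ultimately show "c x < K" unfolding c_def by presburger
  next
    fix x y assume x: "x \<in> P" and y: "y \<in> P" and adj: "strong_compat_adj G P leq phi x y"
    from adj obtain g where g: "g \<in> carrier G" and cmp: "comparable leq x (phi g y)"
      and no: "y \<notin> orbit G phi x"
      unfolding strong_compat_adj_def by auto
    define z where "z = phi g y"
    have z: "z \<in> P" using group_action.element_image[OF ga g y] z_def by simp
    have hz: "hgt P leq z = hgt P leq y" using hgt_map[OF assms(4,5) g y] z_def by simp
    have "z \<in> orbit G phi y" unfolding orbit_def z_def using g by blast
    then have "x \<noteq> z"
      using group_action.orbit_sym[OF ga y x] no by blast
    have "hgt P leq x \<noteq> hgt P leq z"
    proof (cases "leq x z")
      case True
      then show ?thesis using hgt_strict[OF assms(4) po x z _ \<open>x \<noteq> z\<close>] by simp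
    next
      case False
      then have "leq z x" using cmp unfolding comparable_def z_def by simp
      moreover have "z \<noteq> x" using \<open>x \<noteq> z\<close> by simp
      ultimately show ?thesis using hgt_strict[OF assms(4) po z x] by simp
    qed
    moreover have "1 \<le> hgt P leq x" "1 \<le> hgt P leq y"
      using hgt_ge1[OF assms(4) x po] hgt_ge1[OF assms(4) y po] by auto
    ultimately show "c x \<noteq> c y" unfolding c_def using hz by presburger
  qed
  have "chromatic_number P (strong_compat_adj G P leq phi) \<le> K"
    unfolding chromatic_number_def by (rule Least_le, rule exI[of _ c], rule col)
  then show ?thesis unfolding poset_dim_def K_def by simp
qed

end
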